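(* Let $j\in\mathbb{N}$ and let $n=p_1^{a_1}\cdots p_k^{a_k}$ with $k\in\mathbb{N}$, distinct primes $p_1,\dots,p_k$ and $a_1,\dots,a_k\in\mathbb{N}$. Then \[c_j(p_1^{a_1}\cdots p_k^{a_k})=(-1)^{1-j}\,j\;{}_{k+1}F_k\big(a_1+1,\dots,a_k+1,\,1-j;\ \underbrace{1,\dots,1}_{k-1},\,2;\ 1\big).\]
   Context: For $j,n\in\mathbb{N}$, $c_j(n)$ is the number of ordered $j$-tuples of integers each $\ge 2$ whose product is $n$. The generalised hypergeometric series is ${}_kF_n(a_1,\dots,a_k;b_1,\dots,b_n;z)=\sum_{m=0}^\infty \frac{a_1^{\overline m}\cdots a_k^{\overline m}\,z^m}{b_1^{\overline m}\cdots b_n^{\overline m}\,m!}$, with the rising factorial $a^{\overline m}=\prod_{i=0}^{m-1}(a+i)$, $a^{\overline 0}=1$; here the series terminates since $(1-j)^{\overline m}=0$ for $m\ge j$. *)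

theory Defs
  imports Complex_Main "HOL-Computational_Algebra.Primes"
begin

definition c :: "nat \<Rightarrow> nat \<Rightarrow> nat" where
  "c j n = card {xs :: int list. length xs = j \<and> (\<forall>x\<in>set xs. x \<ge> 2) \<and> prod_list xs = int n}"

definition hypergeom :: "real list \<Rightarrow> real list \<Rightarrow> real \<Rightarrow> real" where
  "hypergeom as bs z =
     (\<Sum>m. prod_list (map (\<lambda>a. pochhammer a m) as) * z ^ m /
           (prod_list (map (\<lambda>b. pochhammer b m) bs) * fact m))"

end

theory Submission
  imports Defs
begin

definition cnt :: "nat \<Rightarrow> nat \<Rightarrow> nat \<Rightarrow> nat" where
  "cnt lo j n = card {xs :: nat list. length xs = j \<and> (\<forall>x\<in>set xs. lo \<le> x) \<and> prod_list xs = n}"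

lemma dvd_prod_list_mem: "x \<in> set xs \<Longrightarrow> (x::nat) dvd prod_list xs"
  by (induction xs) auto

lemma cnt_set_finite:
  assumes "n > 0"
  shows "finite {xs :: nat list. length xs = j \<and> (\<forall>x\<in>set xs. lo \<le> x) \<and> prod_list xs = n}"
proof (rule finite_subset)
  show "finite {xs. set xs \<subseteq> {..n} \<and> length xs = j}"
    by (rule finite_lists_length_eq) simp
  show "{xs :: nat list. length xs = j \<and> (\<forall>x\<in>set xs. lo \<le> x) \<and> prod_list xs = n}
     \<subseteq> {xs. set xs \<subseteq> {..n} \<and> length xs = j}"
    using assms by (auto intro!: dvd_imp_le dvd_prod_list_mem)
qed

lemma cnt_0: "cnt lo 0 n = (if n = 1 then 1 else 0)"
proof -
  have "{xs :: nat list. length xs = 0 \<and> (\<forall>x\<in>set xs. lo \<le> x) \<and> prod_list xs = n}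
     = (if n = 1 then {[]} else {})" by auto
  then show ?thesis unfolding cnt_def by simp
qed

lemma cnt_Suc:
  assumes "n > 0" "lo \<ge> 1"
  shows "cnt lo (Suc j) n = (\<Sum>d\<in>{d. d dvd n \<and> lo \<le> d}. cnt lo j (n div d))"
proof -
  let ?S = "\<lambda>j n. {xs :: nat list. length xs = j \<and> (\<forall>x\<in>set xs. lo \<le> x) \<and> prod_list xs = n}"
  let ?D = "{d. d dvd n \<and> lo \<le> d}"
  have fD: "finite ?D" using assms(1) by (auto intro: finite_subset[of _ "{..n}"] dvd_imp_le)
  have eq: "?S (Suc j) n = (\<Union>d\<in>?D. (\<lambda>xs. d # xs) ` ?S j (n div d))"
  proof (intro equalityI subsetI)
    fix xs assume "xs \<in> ?S (Suc j) n"
    then obtain d ys where xs: "xs = d # ys" and "length ys = j" "lo \<le> d" "\<forall>x\<in>set ys. lo \<le> x"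
      "d * prod_list ys = n" by (cases xs) auto
    moreover have "d > 0" using \<open>lo \<le> d\<close> assms by simp
    ultimately have "d \<in> ?D" "xs \<in> (\<lambda>xs. d # xs) ` ?S j (n div d)" by auto
    then show "xs \<in> (\<Union>d\<in>?D. (\<lambda>xs. d # xs) ` ?S j (n div d))" by blast
  next
    fix xs assume "xs \<in> (\<Union>d\<in>?D. (\<lambda>xs. d # xs) ` ?S j (n div d))"
    then show "xs \<in> ?S (Suc j) n" by auto
  qed
  have "card (?S (Suc j) n) = (\<Sum>d\<in>?D. card ((\<lambda>xs. d # xs) ` ?S j (n div d)))"
    unfolding eq
  proof (rule card_UN_disjoint[OF fD])
    show "\<forall>i\<in>?D. finite ((#) i ` ?S j (n div i))"
      using assms by (auto intro!: finite_imageI cnt_set_finite simp: dvd_div_eq_0_iff)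
  qed auto
  also have "\<dots> = (\<Sum>d\<in>?D. cnt lo j (n div d))"
    by (intro sum.cong refl) (simp add: card_image cnt_def)
  finally show ?thesis unfolding cnt_def .
qed


lemma int_prod_list: "int (prod_list xs) = prod_list (map int xs)"
  by (induction xs) auto

lemma c_cnt: "c j n = cnt 2 j n"
proof -
  let ?N = "{xs :: nat list. length xs = j \<and> (\<forall>x\<in>set xs. 2 \<le> x) \<and> prod_list xs = n}"
  let ?I = "{xs :: int list. length xs = j \<and> (\<forall>x\<in>set xs. x \<ge> 2) \<and> prod_list xs = int n}"
  have "?I = map int ` ?N"
  proof (intro equalityI subsetI)
    fix xs assume xs: "xs \<in> ?I"
    have "map (int \<circ> nat) xs = xs" by (rule map_idI) (use xs in auto)
    then have "xs = map int (map nat xs)" by simp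
    moreover have "map nat xs \<in> ?N"
    proof -
      have "int (prod_list (map nat xs)) = int n"
        using xs \<open>xs = map int (map nat xs)\<close> by (subst int_prod_list) simp
      then show ?thesis using xs by auto
    qed
    ultimately show "xs \<in> map int ` ?N" by blast
  next
    fix xs assume "xs \<in> map int ` ?N"
    then show "xs \<in> ?I" by (auto simp: int_prod_list[symmetric])
  qed
  moreover have "inj_on (map int) ?N" by (simp add: inj_on_def)
  ultimately have "card ?I = card ?N" by (simp add: card_image)
  then show ?thesis unfolding c_def cnt_def .
qed

lemma divisors_mult:
  fixes m q :: nat
  assumes "coprime m q"
  shows "{d. d dvd m * q} = (\<lambda>(x, y). x * y) ` ({d. d dvd m} \<times> {d. d dvd q})"
  using assms by (auto dest: division_decomp intro: mult_dvd_mono)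

lemma divisors_mult_inj:
  fixes m q :: nat
  assumes "coprime m q"
  shows "inj_on (\<lambda>(x, y). x * y) ({d. d dvd m} \<times> {d. d dvd q})"
proof (rule inj_onI, clarify)
  fix x y x' y' :: nat
  assume h: "x dvd m" "y dvd q" "x' dvd m" "y' dvd q" "x * y = x' * y'"
  have c1: "coprime x y'" "coprime x' y" "coprime x y" "coprime x' y'"
    using assms h by (meson coprime_divisors)+
  have "x dvd x'" using h c1
    by (metis coprime_dvd_mult_left_iff dvd_triv_left)
  moreover have "x' dvd x" using h c1
    by (metis coprime_dvd_mult_left_iff dvd_triv_left)
  ultimately have "x = x'" by (simp add: dvd_antisym)
  moreover have "y dvd y'" using h c1
    by (metis coprime_dvd_mult_right_iff dvd_triv_right coprime_commute)
  moreover have "y' dvd y" using h c1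
    by (metis coprime_dvd_mult_right_iff dvd_triv_right coprime_commute)
  ultimately show "x = x' \<and> y = y'" by (simp add: dvd_antisym)
qed

lemma cnt1_Suc:
  assumes "n > 0"
  shows "cnt 1 (Suc j) n = (\<Sum>d | d dvd n. cnt 1 j (n div d))"
proof -
  have D: "{d. d dvd n \<and> 1 \<le> d} = {d. d dvd n}"
    using assms by (auto simp: Suc_le_eq intro: Nat.gr0I)
  show ?thesis using cnt_Suc[of n 1 j] assms unfolding D by simp
qed

lemma cnt1_mult:
  fixes m q :: nat
  assumes "coprime m q" "m > 0" "q > 0"
  shows "cnt 1 i (m * q) = cnt 1 i m * cnt 1 i q"
  using assms
proof (induction i arbitrary: m q)
  case 0
  then show ?case by (simp add: cnt_0)
next
  case (Suc i)
  have "cnt 1 (Suc i) (m * q) = (\<Sum>d\<in>{d. d dvd m * q}. cnt 1 i (m * q div d))"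
    using Suc.prems by (intro cnt1_Suc) simp
  also have "\<dots> = (\<Sum>(x, y)\<in>{d. d dvd m} \<times> {d. d dvd q}. cnt 1 i (m * q div (x * y)))"
    by (subst divisors_mult[OF Suc.prems(1)], subst sum.reindex[OF divisors_mult_inj[OF Suc.prems(1)]])
       (simp add: case_prod_unfold)
  also have "\<dots> = (\<Sum>(x, y)\<in>{d. d dvd m} \<times> {d. d dvd q}. cnt 1 i (m div x) * cnt 1 i (q div y))"
  proof (intro sum.cong refl, clarify)
    fix x y assume h: "x dvd m" "y dvd q"
    have "m * q div (x * y) = (m div x) * (q div y)" using h
      by (metis div_mult_div_if_dvd)
    moreover have "coprime (m div x) (q div y)"
    proof -
      have "m div x dvd m" using h(1) by (metis dvd_mult_div_cancel dvd_triv_right)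
      moreover have "q div y dvd q" using h(2) by (metis dvd_mult_div_cancel dvd_triv_right)
      ultimately show ?thesis using Suc.prems(1) coprime_divisors by blast
    qed
    moreover have "m div x > 0" "q div y > 0" using h Suc.prems
      by (auto simp: dvd_div_eq_0_iff)
    ultimately show "cnt 1 i (m * q div (x * y)) = cnt 1 i (m div x) * cnt 1 i (q div y)"
      using Suc.IH by simp
  qed
  also have "\<dots> = (\<Sum>x\<in>{d. d dvd m}. cnt 1 i (m div x)) * (\<Sum>y\<in>{d. d dvd q}. cnt 1 i (q div y))"
    by (simp add: sum_product sum.cartesian_product)
  also have "\<dots> = cnt 1 (Suc i) m * cnt 1 (Suc i) q"
    using Suc.prems cnt1_Suc[of m i] cnt1_Suc[of q i] by simp
  finally show ?case .
qed

lemma sum_choose_aux: "(\<Sum>b\<le>a. (b + m) choose m) = (a + Suc m) choose Suc m"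
  by (induction a) auto

lemma cnt1_primepow:
  assumes "prime (p::nat)"
  shows "cnt 1 (Suc m) (p ^ a) = (a + m) choose m"
proof (induction m arbitrary: a)
  case 0
  have "{xs :: nat list. length xs = 1 \<and> (\<forall>x\<in>set xs. 1 \<le> x) \<and> prod_list xs = p ^ a} = {[p ^ a]}"
    using assms by (auto simp: length_Suc_conv Suc_le_eq prime_gt_0_nat)
  then show ?case by (simp add: cnt_def)
next
  case (Suc m)
  have p1: "p > 1" using assms prime_gt_1_nat by blast
  have D: "{d. d dvd p ^ a} = (\<lambda>b. p ^ (a - b)) ` {..a}"
  proof (intro equalityI subsetI)
    fix d assume "d \<in> {d. d dvd p ^ a}"
    then obtain i where "i \<le> a" "d = p ^ i" using divides_primepow_nat[OF assms] by auto
    then have "d = p ^ (a - (a - i))" "a - i \<in> {..a}" by auto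
    then show "d \<in> (\<lambda>b. p ^ (a - b)) ` {..a}" by blast
  next
    fix d assume "d \<in> (\<lambda>b. p ^ (a - b)) ` {..a}"
    then show "d \<in> {d. d dvd p ^ a}" using p1
      by (auto simp: le_imp_power_dvd)
  qed
  have inj: "inj_on (\<lambda>b. p ^ (a - b)) {..a}"
    using p1 by (auto intro!: inj_onI dest: power_inject_exp[THEN iffD1, rotated])
  have "cnt 1 (Suc (Suc m)) (p ^ a) = (\<Sum>b\<le>a. cnt 1 (Suc m) (p ^ a div p ^ (a - b)))"
    using p1 cnt1_Suc[of "p ^ a" "Suc m"] by (simp add: D sum.reindex[OF inj])
  also have "\<dots> = (\<Sum>b\<le>a. (b + m) choose m)"
  proof (intro sum.cong refl)
    fix b assume "b \<in> {..a}"
    then have "p ^ a div p ^ (a - b) = p ^ b" using p1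
      by (simp add: power_diff[symmetric])
    then show "cnt 1 (Suc m) (p ^ a div p ^ (a - b)) = (b + m) choose m" using Suc.IH by simp
  qed
  also have "\<dots> = (a + Suc m) choose Suc m" by (rule sum_choose_aux)
  finally show ?case .
qed

lemma cnt1_prod:
  assumes "finite S" "\<And>i. i \<in> S \<Longrightarrow> prime (p i)" "inj_on p S"
  shows "cnt 1 (Suc m) (\<Prod>i\<in>S. p i ^ a i) = (\<Prod>i\<in>S. (a i + m) choose m)"
  using assms
proof (induction S rule: finite_induct)
  case empty
  show ?case using cnt1_primepow[of 2 m 0] by simp
next
  case (insert x S)
  have cop: "coprime (p x ^ a x) (\<Prod>i\<in>S. p i ^ a i)"
  proof (rule prod_coprime_right)
    fix i assume "i \<in> S"
    then have "p x \<noteq> p i" using insert by (auto simp: inj_on_def)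
    then show "coprime (p x ^ a x) (p i ^ a i)"
      using insert \<open>i \<in> S\<close> by (simp add: primes_coprime)
  qed
  have pos: "(\<Prod>i\<in>S. p i ^ a i) > 0" using insert by (auto intro!: prod_pos simp: prime_gt_0_nat)
  have "cnt 1 (Suc m) (\<Prod>i\<in>insert x S. p i ^ a i) = cnt 1 (Suc m) (p x ^ a x) * cnt 1 (Suc m) (\<Prod>i\<in>S. p i ^ a i)"
    unfolding prod.insert[OF insert(1,2)]
    by (rule cnt1_mult[OF cop _ pos]) (simp add: prime_gt_0_nat insert)
  then show ?case using insert cnt1_primepow by (simp add: inj_on_insert)
qed


lemma cnt2_Suc:
  assumes "n > 0"
  shows "real (cnt 2 (Suc j) n) + real (cnt 2 j n) = (\<Sum>d | d dvd n. real (cnt 2 j (n div d)))"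
proof -
  have D: "{d. d dvd n} = insert 1 {d. d dvd n \<and> 2 \<le> d}"
    using assms by (auto intro: Nat.gr0I simp: numeral_2_eq_2 Suc_le_eq)
  have f: "finite {d. d dvd n \<and> 2 \<le> d}"
    using assms by (auto intro: finite_subset[of _ "{..n}"] dvd_imp_le)
  show ?thesis using assms
    by (simp add: D sum.insert[OF f] cnt_Suc[of n 2 j] of_nat_sum)
qed

lemma pascal_alt:
  fixes g :: "nat \<Rightarrow> real"
  shows "(\<Sum>i\<le>Suc j. (-1)^i * real (Suc j choose i) * g i)
       = (\<Sum>i\<le>j. (-1)^i * real (j choose i) * g i) - (\<Sum>i\<le>j. (-1)^i * real (j choose i) * g (Suc i))"
proof -
  have e1: "(\<Sum>i\<le>Suc j. (-1)^i * real (Suc j choose i) * g i)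
     = g 0 - (\<Sum>i\<le>j. (-1)^i * real (j choose Suc i) * g (Suc i)) - (\<Sum>i\<le>j. (-1)^i * real (j choose i) * g (Suc i))"
  proof -
    have "(\<Sum>i\<le>Suc j. (-1)^i * real (Suc j choose i) * g i)
       = g 0 + (\<Sum>i\<le>j. (-1)^(Suc i) * real (Suc j choose Suc i) * g (Suc i))"
      by (subst sum.atMost_Suc_shift) simp
    also have "(\<Sum>i\<le>j. (-1)^(Suc i) * real (Suc j choose Suc i) * g (Suc i))
       = (\<Sum>i\<le>j. - ((-1)^i * real (j choose Suc i) * g (Suc i)) - (-1)^i * real (j choose i) * g (Suc i))"
      by (intro sum.cong refl) (simp add: algebra_simps)
    also have "\<dots> = - (\<Sum>i\<le>j. (-1)^i * real (j choose Suc i) * g (Suc i)) - (\<Sum>i\<le>j. (-1)^i * real (j choose i) * g (Suc i))"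
      by (simp add: sum_subtractf sum_negf)
    finally show ?thesis by simp
  qed
  have "(\<Sum>i\<le>j. (-1)^i * real (j choose i) * g i) = (\<Sum>i\<le>Suc j. (-1)^i * real (j choose i) * g i)"
    by simp
  also have "\<dots> = g 0 + (\<Sum>i\<le>j. (-1)^(Suc i) * real (j choose Suc i) * g (Suc i))"
    by (subst sum.atMost_Suc_shift) simp
  also have "\<dots> = g 0 - (\<Sum>i\<le>j. (-1)^i * real (j choose Suc i) * g (Suc i))"
    by (simp add: sum_negf[symmetric])
  finally show ?thesis using e1 by simp
qed

lemma cnt2_formula:
  assumes "n > 0"
  shows "real (cnt 2 j n) = (-1)^j * (\<Sum>i\<le>j. (-1)^i * real (j choose i) * real (cnt 1 i n))"
  using assms
proof (induction j arbitrary: n)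
  case 0
  then show ?case by (simp add: cnt_0)
next
  case (Suc j)
  have dpos: "\<And>d. d \<in> {d. d dvd n} \<Longrightarrow> n div d > 0" using Suc.prems
    by (auto simp: dvd_div_eq_0_iff)
  have "real (cnt 2 (Suc j) n) = (\<Sum>d | d dvd n. real (cnt 2 j (n div d))) - real (cnt 2 j n)"
    using cnt2_Suc[OF Suc.prems, of j] by simp
  also have "(\<Sum>d | d dvd n. real (cnt 2 j (n div d)))
     = (\<Sum>d | d dvd n. (-1)^j * (\<Sum>i\<le>j. (-1)^i * real (j choose i) * real (cnt 1 i (n div d))))"
    by (intro sum.cong refl Suc.IH dpos)
  also have "\<dots> = (-1)^j * (\<Sum>i\<le>j. (-1)^i * real (j choose i) * (\<Sum>d | d dvd n. real (cnt 1 i (n div d))))"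
    by (simp add: sum_distrib_left sum.swap[of _ "{d. d dvd n}"])
  also have "\<dots> = (-1)^j * (\<Sum>i\<le>j. (-1)^i * real (j choose i) * real (cnt 1 (Suc i) n))"
    using Suc.prems by (simp add: cnt1_Suc[unfolded One_nat_def] of_nat_sum)
  finally have X: "real (cnt 2 (Suc j) n) = (-1)^j * (\<Sum>i\<le>j. (-1)^i * real (j choose i) * real (cnt 1 (Suc i) n))
      - (-1)^j * (\<Sum>i\<le>j. (-1)^i * real (j choose i) * real (cnt 1 i n))"
    using Suc.IH[OF Suc.prems] by simp
  show ?case unfolding X pascal_alt[of j "\<lambda>i. real (cnt 1 i n)"]
    by (simp add: algebra_simps del: sum.atMost_Suc)
qed

lemma poch_binom: "pochhammer (real a + 1) m = real ((a + m) choose m) * fact m"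
proof -
  have "fact a * pochhammer (real a + 1) m = fact (a + m)"
  proof (induction m)
    case (Suc m)
    have "fact a * pochhammer (real a + 1) (Suc m) = (fact a * pochhammer (real a + 1) m) * (real (a + m) + 1)"
      by (simp add: pochhammer_Suc algebra_simps)
    also have "\<dots> = fact (a + Suc m)" using Suc.IH by (simp add: algebra_simps)
    finally show ?case .
  qed simp
  then have "pochhammer (real a + 1) m = fact (a + m) / fact a"
    by (simp add: field_simps)
  then show ?thesis by (simp add: binomial_fact field_simps)
qed


lemma cancel_aux:
  fixes G F r x P s B :: real
  assumes "G > 0" "F > 0" "r > 0"
  shows "x * (P * (G * F) * (s * B * F) / (G * (r * F) * F)) = s * P * (x * B) / r"
proof -
  have "P * (G * F) * (s * B * F) / (G * (r * F) * F) = (s * P * B / r) * ((G * F * F) / (G * F * F))"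
    by (simp add: ac_simps)
  also have "(G * F * F) / (G * F * F) = 1" using assms by simp
  finally show ?thesis by simp
qed

lemma term_eval:
  fixes j' m k :: nat and a :: "nat \<Rightarrow> nat"
  assumes "m \<le> j'" "k \<ge> 1"
  shows "real (Suc j') *
    (prod_list (map (\<lambda>x. pochhammer x m) (map (\<lambda>i. real (a i + 1)) [1..<k+1] @ [1 - real (Suc j')])) * 1 ^ m /
     (prod_list (map (\<lambda>x. pochhammer x m) (replicate (k - 1) 1 @ [2])) * fact m))
    = (-1)^m * real (Suc j' choose Suc m) * (\<Prod>l\<in>{1..k}. real ((a l + m) choose m))"
proof -
  define F :: real where "F = fact m"
  have Fpos: "F > 0" unfolding F_def by simp
  have num1: "prod_list (map (\<lambda>x. pochhammer x m) (map (\<lambda>i. real (a i + 1)) [1..<k+1]))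
      = (\<Prod>l\<in>{1..k}. real ((a l + m) choose m)) * F ^ k"
  proof -
    have "prod_list (map (\<lambda>x. pochhammer x m) (map (\<lambda>i. real (a i + 1)) [1..<k+1]))
        = (\<Prod>l\<in>{1..k}. pochhammer (real (a l) + 1) m)"
    proof -
      have "prod_list (map (\<lambda>x. pochhammer x m) (map (\<lambda>i. real (a i + 1)) [1..<k+1]))
          = prod_list (map (\<lambda>l. pochhammer (real (a l) + 1) m) [1..<k+1])"
        by (simp add: o_def add.commute del: upt_Suc)
      also have "\<dots> = (\<Prod>l\<in>set [1..<k+1]. pochhammer (real (a l) + 1) m)"
        by (rule prod.distinct_set_conv_list[symmetric]) simp
      also have "set [1..<k+1] = {1..k}" by auto
      finally show ?thesis .
    qed
    also have "\<dots> = (\<Prod>l\<in>{1..k}. real ((a l + m) choose m) * F)"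
      by (simp add: poch_binom F_def)
    also have "\<dots> = (\<Prod>l\<in>{1..k}. real ((a l + m) choose m)) * F ^ k"
      by (simp add: prod.distrib)
    finally show ?thesis .
  qed
  have num2: "pochhammer (1 - real (Suc j')) m = (-1)^m * real (j' choose m) * F"
  proof -
    have "pochhammer (1 - real (Suc j')) m = pochhammer (- real j') m" by simp
    also have "\<dots> = (-1)^m * pochhammer (real j' - real m + 1) m" by (rule pochhammer_minus)
    also have "real j' - real m = real (j' - m)" using assms by simp
    also have "pochhammer (real (j' - m) + 1) m = real (j' choose m) * F"
      using poch_binom[of "j' - m" m] assms by (simp add: F_def)
    finally show ?thesis by simp
  qed
  have den: "prod_list (map (\<lambda>x. pochhammer x m) (replicate (k - 1) 1 @ [2])) = F ^ (k - 1) * (real (Suc m) * F)"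
  proof -
    have "pochhammer (2::real) m = fact (Suc m)"
      using pochhammer_rec[of "1::real" m] by (simp add: pochhammer_fact)
    then show ?thesis by (simp add: F_def pochhammer_fact[symmetric])
  qed
  have num: "prod_list (map (\<lambda>x. pochhammer x m) (map (\<lambda>i. real (a i + 1)) [1..<k+1] @ [1 - real (Suc j')]))
     = (\<Prod>l\<in>{1..k}. real ((a l + m) choose m)) * F ^ k * ((-1)^m * real (j' choose m) * F)"
    unfolding map_append prod_list.append num1 by (simp only: list.map prod_list.Cons prod_list.Nil num2 mult_1_right)
  have Fk: "F ^ k = F ^ (k - 1) * F" using assms by (cases k) auto
  have bin: "real (Suc m) * real (Suc j' choose Suc m) = real (Suc j') * real (j' choose m)"
    using Suc_times_binomial[of m j'] by (metis of_nat_mult)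
  have "real (Suc j') *
    (prod_list (map (\<lambda>x. pochhammer x m) (map (\<lambda>i. real (a i + 1)) [1..<k+1] @ [1 - real (Suc j')])) * 1 ^ m /
     (prod_list (map (\<lambda>x. pochhammer x m) (replicate (k - 1) 1 @ [2])) * fact m))
    = real (Suc j') * ((\<Prod>l\<in>{1..k}. real ((a l + m) choose m)) * (F ^ (k - 1) * F) * ((-1)^m * real (j' choose m) * F)
       / (F ^ (k - 1) * (real (Suc m) * F) * F))"
    unfolding num den Fk F_def[symmetric] by simp
  also have "\<dots> = (-1)^m * (\<Prod>l\<in>{1..k}. real ((a l + m) choose m)) * (real (Suc j') * real (j' choose m)) / real (Suc m)"
  proof -
    have "F ^ (k - 1) > 0" using Fpos by simp
    then show ?thesis using Fpos by (intro cancel_aux) auto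
  qed
  also have "\<dots> = (-1)^m * real (Suc j' choose Suc m) * (\<Prod>l\<in>{1..k}. real ((a l + m) choose m))"
    unfolding bin[symmetric] by (simp add: field_simps del: of_nat_Suc)
  finally show ?thesis .
qed


lemma powi_aux: "(-1::real) powi (1 - int (Suc j')) = (-1) ^ j'"
proof -
  have "1 - int (Suc j') = - int j'" by simp
  then have "(-1::real) powi (1 - int (Suc j')) = inverse ((-1) ^ j')"
    by (simp add: power_int_minus)
  also have "\<dots> = (-1) ^ j'" by (simp add: power_inverse[symmetric])
  finally show ?thesis .
qed

theorem theorem1:
  fixes j k :: nat and p a :: "nat \<Rightarrow> nat"
  assumes "j \<ge> 1" and "k \<ge> 1"
    and "\<And>i. i \<in> {1..k} \<Longrightarrow> prime (p i)"
    and "inj_on p {1..k}"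
    and "\<And>i. i \<in> {1..k} \<Longrightarrow> a i \<ge> 1"
  shows "real (c j (\<Prod>i\<in>{1..k}. p i ^ a i)) =
    (-1) powi (1 - int j) * real j *
      hypergeom (map (\<lambda>i. real (a i + 1)) [1..<k+1] @ [1 - real j])
                (replicate (k - 1) 1 @ [2]) 1"
proof -
  obtain j' where j: "j = Suc j'" using assms(1) by (cases j) auto
  define N where "N = (\<Prod>i\<in>{1..k}. p i ^ a i)"
  define P where "P = (\<lambda>m. \<Prod>l\<in>{1..k}. real ((a l + m) choose m))"
  have Npos: "N > 0" unfolding N_def using assms(3) by (auto intro!: prod_pos simp: prime_gt_0_nat)
  have N1: "N \<noteq> 1"
  proof
    assume "N = 1"
    have "p 1 ^ a 1 dvd N" unfolding N_def using assms(2) by (intro dvd_prodI) auto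
    moreover have "a 1 \<ge> 1" using assms(5)[of 1] assms(2) by auto
    ultimately have "p 1 dvd N" by (metis dvd_power dvd_trans not_one_le_zero neq0_conv)
    then show False using \<open>N = 1\<close> assms(3)[of 1] assms(2) by auto
  qed
  have A: "\<And>m. real (cnt 1 (Suc m) N) = P m"
    unfolding N_def P_def using assms(3,4) by (subst cnt1_prod) auto
  have "real (c j N) = (-1)^j * (\<Sum>i\<le>j. (-1)^i * real (j choose i) * real (cnt 1 i N))"
    unfolding c_cnt using cnt2_formula[OF Npos] .
  also have "\<dots> = (-1)^(Suc j') * (\<Sum>m\<le>j'. (-1)^(Suc m) * real (Suc j' choose Suc m) * P m)"
    unfolding j by (subst sum.atMost_Suc_shift) (simp add: cnt_0 N1[unfolded One_nat_def] A[unfolded One_nat_def] del: binomial_Suc_Suc)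
  also have "\<dots> = (-1)^j' * (\<Sum>m\<le>j'. (-1)^m * real (Suc j' choose Suc m) * P m)"
    by (simp add: sum_distrib_left)
  finally have L: "real (c j N) = (-1)^j' * (\<Sum>m\<le>j'. (-1)^m * real (Suc j' choose Suc m) * P m)" .
  define T where "T = (\<lambda>m. prod_list (map (\<lambda>x. pochhammer x m) (map (\<lambda>i. real (a i + 1)) [1..<k+1] @ [1 - real (Suc j')])) * 1 ^ m /
     (prod_list (map (\<lambda>x. pochhammer x m) (replicate (k - 1) 1 @ [2])) * fact m))"
  have H: "hypergeom (map (\<lambda>i. real (a i + 1)) [1..<k+1] @ [1 - real j]) (replicate (k - 1) 1 @ [2]) 1
      = (\<Sum>m\<le>j'. T m)"
    unfolding hypergeom_def j T_def[symmetric]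
  proof (rule suminf_finite)
    fix m assume "m \<notin> {..j'}"
    then have "pochhammer (1 - real (Suc j')) m = 0"
      by (simp add: pochhammer_of_nat_eq_0_iff[of j' m, simplified])
    then show "T m = 0" unfolding T_def by simp
  qed simp
  have "(-1) powi (1 - int j) * real j * (\<Sum>m\<le>j'. T m)
      = (-1)^j' * (\<Sum>m\<le>j'. real (Suc j') * T m)"
    unfolding j powi_aux by (simp add: sum_distrib_left mult.assoc)
  also have "\<dots> = (-1)^j' * (\<Sum>m\<le>j'. (-1)^m * real (Suc j' choose Suc m) * P m)"
    unfolding T_def P_def using assms(2) by (intro arg_cong[where f="\<lambda>x. _ * x"] sum.cong refl term_eval) auto
  finally show ?thesis using L H unfolding N_def by simp
qed

end
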